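(* Let $\Bbbk$ be a field of characteristic $0$ and $A=\Bbbk[t]$ over $B=\Bbbk$. A double bracket on $A$ is quasi-Poisson if and only if it is of the form $$\{\!\{t,t\}\!\}=\lambda(t\otimes1-1\otimes t)+\mu(t^2\otimes1-1\otimes t^2)+\nu(t^2\otimes t-t\otimes t^2)$$ for some $\lambda,\mu,\nu\in\Bbbk$ with $4(\mu^2-\lambda\nu)=1$.
   Context: $\otimes=\otimes_\Bbbk$; Sweedler notation $d=d'\otimes d''$. A double bracket on $A$ is a $\Bbbk$-bilinear map $A\times A\to A\otimes A$ with $\{\!\{a,b\}\!\}=-\{\!\{b,a\}\!\}''\otimes\{\!\{b,a\}\!\}'$ and $\{\!\{a,bc\}\!\}=\{\!\{a,b\}\!\}c+b\{\!\{a,c\}\!\}$, where $x(d'\otimes d'')y=xd'\otimes d''y$. Its triple bracket is $\{\!\{a,b,c\}\!\}=\{\!\{a,\{\!\{b,c\}\!\}'\}\!\}\otimes\{\!\{b,c\}\!\}''+\tau\{\!\{b,\{\!\{c,a\}\!\}'\}\!\}\otimes\{\!\{c,a\}\!\}''+\tau^2\{\!\{c,\{\!\{a,b\}\!\}'\}\!\}\otimes\{\!\{a,b\}\!\}''$, with $\tau(x_1\otimes x_2\otimes x_3)=x_3\otimes x_1\otimes x_2$. It is quasi-Poisson (over $B=\Bbbk$) if $\{\!\{a,b,c\}\!\}=\frac14(ca\otimes b\otimes1-ca\otimes1\otimes b-c\otimes ab\otimes1+c\otimes a\otimes b-a\otimes b\otimes c+a\otimes1\otimes bc+1\otimes ab\otimes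 c-1\otimes a\otimes bc)$ for all $a,b,c\in A$. *)

theory Defs
  imports "HOL-Computational_Algebra.Polynomial"
begin

text \<open>The tensor square A \<otimes> A is
 identified with k[x,y] = 'a poly poly (inner variable x = first tensor factor,
 outer variable y = second tensor factor); the element a \<otimes> b is a(x) b(y).
 Similarly A \<otimes> A \<otimes> A is 'a poly poly poly (x, y, z = factors 1, 2, 3).
 The coefficient of t^i \<otimes> t^j in d is coeff (coeff d j) i.\<close>

type_synonym 'a tens2 = "'a poly poly"
type_synonym 'a tens3 = "'a poly poly poly"

definition tensor2 :: "'a::comm_ring_1 poly \<Rightarrow> 'a poly \<Rightarrow> 'a tens2" where
  "tensor2 a b = smult a (map_poly (\<lambda>c. [:c:]) b)"

definition tensor3 :: "'a::comm_ring_1 poly \<Rightarrow> 'a poly \<Rightarrow> 'a poly \<Rightarrow> 'a tens3" where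
  "tensor3 a b c = smult (tensor2 a b) (map_poly (\<lambda>r. [:[:r:]:]) c)"

definition tensor21 :: "'a::comm_ring_1 tens2 \<Rightarrow> 'a poly \<Rightarrow> 'a tens3" where
  "tensor21 e c = smult e (map_poly (\<lambda>r. [:[:r:]:]) c)"

definition sc2 :: "'a::comm_ring_1 \<Rightarrow> 'a tens2 \<Rightarrow> 'a tens2" where
  "sc2 r d = smult [:r:] d"

definition sc3 :: "'a::comm_ring_1 \<Rightarrow> 'a tens3 \<Rightarrow> 'a tens3" where
  "sc3 r e = smult [:[:r:]:] e"

text \<open>outer bimodule structure: x (d' \<otimes> d'') y = x d' \<otimes> d'' y\<close>
definition bimod :: "'a::comm_ring_1 poly \<Rightarrow> 'a tens2 \<Rightarrow> 'a poly \<Rightarrow> 'a tens2" where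
  "bimod x d y = smult x d * map_poly (\<lambda>c. [:c:]) y"

text \<open>d' \<otimes> d'' \<mapsto> d'' \<otimes> d'\<close>
definition flip2 :: "'a::comm_ring_1 tens2 \<Rightarrow> 'a tens2" where
  "flip2 d = (\<Sum>j\<le>degree d. \<Sum>i\<le>degree (coeff d j).
      tensor2 (monom (coeff (coeff d j) i) j) (monom 1 i))"

text \<open>tau (x1 \<otimes> x2 \<otimes> x3) = x3 \<otimes> x1 \<otimes> x2\<close>
definition tau3 :: "'a::comm_ring_1 tens3 \<Rightarrow> 'a tens3" where
  "tau3 e = (\<Sum>k\<le>degree e. \<Sum>j\<le>degree (coeff e k). \<Sum>i\<le>degree (coeff (coeff e k) j).
      tensor3 (monom (coeff (coeff (coeff e k) j) i) k) (monom 1 i) (monom 1 j))"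

text \<open>F(d') \<otimes> d'' (Sweedler notation), extended linearly in d\<close>
definition ext_left :: "('a::comm_ring_1 poly \<Rightarrow> 'a tens2) \<Rightarrow> 'a tens2 \<Rightarrow> 'a tens3" where
  "ext_left F d = (\<Sum>j\<le>degree d. \<Sum>i\<le>degree (coeff d j).
      tensor21 (F (monom 1 i)) (monom (coeff (coeff d j) i) j))"

definition double_bracket :: "('a::comm_ring_1 poly \<Rightarrow> 'a poly \<Rightarrow> 'a tens2) \<Rightarrow> bool" where
  "double_bracket B \<longleftrightarrow>
     (\<forall>a1 a2 b. B (a1 + a2) b = B a1 b + B a2 b) \<and>
     (\<forall>a b1 b2. B a (b1 + b2) = B a b1 + B a b2) \<and>
     (\<forall>r a b. B (smult r a) b = sc2 r (B a b)) \<and>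
     (\<forall>r a b. B a (smult r b) = sc2 r (B a b)) \<and>
     (\<forall>a b. B a b = - flip2 (B b a)) \<and>
     (\<forall>a b c. B a (b * c) = bimod 1 (B a b) c + bimod b (B a c) 1)"

definition triple_bracket ::
  "('a::comm_ring_1 poly \<Rightarrow> 'a poly \<Rightarrow> 'a tens2) \<Rightarrow> 'a poly \<Rightarrow> 'a poly \<Rightarrow> 'a poly \<Rightarrow> 'a tens3" where
  "triple_bracket B a b c =
     ext_left (B a) (B b c) + tau3 (ext_left (B b) (B c a)) + tau3 (tau3 (ext_left (B c) (B a b)))"

definition quasi_poisson :: "('a::field poly \<Rightarrow> 'a poly \<Rightarrow> 'a tens2) \<Rightarrow> bool" where
  "quasi_poisson B \<longleftrightarrow> (\<forall>a b c. triple_bracket B a b c = sc3 (1/4)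
      (tensor3 (c * a) b 1 - tensor3 (c * a) 1 b - tensor3 c (a * b) 1 + tensor3 c a b
       - tensor3 a b c + tensor3 a 1 (b * c) + tensor3 1 (a * b) c - tensor3 1 a (b * c)))"

end

theory Submission
  imports Defs
begin


definition ev2 :: "'a::comm_ring_1 tens2 \<Rightarrow> 'a \<Rightarrow> 'a \<Rightarrow> 'a" where
  "ev2 d u v = poly (poly d [:v:]) u"

definition ev3 :: "'a::comm_ring_1 tens3 \<Rightarrow> 'a \<Rightarrow> 'a \<Rightarrow> 'a \<Rightarrow> 'a" where
  "ev3 e x y z = ev2 (poly e [:[:z:]:]) x y"

lemma ev2_add[simp]: "ev2 (d + e) u v = ev2 d u v + ev2 e u v" by (simp add: ev2_def)
lemma ev2_diff[simp]: "ev2 (d - e) u v = ev2 d u v - ev2 e u v" for d :: "'a::comm_ring_1 tens2" by (simp add: ev2_def)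
lemma ev2_uminus[simp]: "ev2 (- d) u v = - ev2 d u v" for d :: "'a::comm_ring_1 tens2" by (simp add: ev2_def)
lemma ev2_zero[simp]: "ev2 0 u v = 0" by (simp add: ev2_def)
lemma ev2_mult[simp]: "ev2 (d * e) u v = ev2 d u v * ev2 e u v" by (simp add: ev2_def)
lemma ev2_sum[simp]: "ev2 (sum f A) u v = (\<Sum>i\<in>A. ev2 (f i) u v)" by (simp add: ev2_def poly_sum)
lemma ev2_smult[simp]: "ev2 (smult a d) u v = poly a u * ev2 d u v" by (simp add: ev2_def)
lemma ev2_const[simp]: "ev2 [:[:r:]:] u v = r" by (simp add: ev2_def)
lemma ev2_one[simp]: "ev2 1 u v = 1" by (simp add: ev2_def)
lemma ev2_power[simp]: "ev2 (d ^ n) u v = ev2 d u v ^ n" by (induct n) auto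

lemma poly_map_const: "poly (map_poly (\<lambda>c. [:c:]) b) [:v:] = [:poly b v:]"
  by (induct b) (auto simp: map_poly_pCons mult.commute)

lemma poly_map_const3: "poly (map_poly (\<lambda>r. [:[:r:]:]) b) [:[:v:]:] = [:[:poly b v:]:]"
  by (induct b) (auto simp: map_poly_pCons mult.commute)

lemma ev2_map_const[simp]: "ev2 (map_poly (\<lambda>c. [:c:]) b) u v = poly b v"
  by (simp add: ev2_def poly_map_const)

lemma ev2_tensor2[simp]: "ev2 (tensor2 a b) u v = poly a u * poly b v"
  by (simp add: tensor2_def)
lemma ev2_sc2[simp]: "ev2 (sc2 r d) u v = r * ev2 d u v"
  by (simp add: sc2_def)
lemma ev2_bimod[simp]: "ev2 (bimod a d b) u v = poly a u * ev2 d u v * poly b v"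
  by (simp add: bimod_def)

lemma ev2_expand: "ev2 d u v = (\<Sum>j\<le>degree d. \<Sum>i\<le>degree (coeff d j). coeff (coeff d j) i * u ^ i * v ^ j)"
proof -
  have "ev2 d u v = (\<Sum>j\<le>degree d. poly (coeff d j) u * v ^ j)"
    unfolding ev2_def by (subst poly_altdef) (simp add: poly_sum poly_power)
  also have "\<dots> = (\<Sum>j\<le>degree d. \<Sum>i\<le>degree (coeff d j). coeff (coeff d j) i * u ^ i * v ^ j)"
    by (subst poly_altdef) (simp add: sum_distrib_right)
  finally show ?thesis .
qed

lemma ev2_flip2[simp]: "ev2 (flip2 d) u v = ev2 d v u"
  by (simp add: flip2_def ev2_expand[of d v u] poly_monom mult_ac)

lemma ev3_add[simp]: "ev3 (d + e) x y z = ev3 d x y z + ev3 e x y z" by (simp add: ev3_def)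
lemma ev3_diff[simp]: "ev3 (d - e) x y z = ev3 d x y z - ev3 e x y z" for d :: "'a::comm_ring_1 tens3" by (simp add: ev3_def)
lemma ev3_sum[simp]: "ev3 (sum f A) x y z = (\<Sum>i\<in>A. ev3 (f i) x y z)" by (simp add: ev3_def poly_sum)
lemma ev3_sc3[simp]: "ev3 (sc3 r e) x y z = r * ev3 e x y z" by (simp add: ev3_def sc3_def)
lemma ev3_tensor21[simp]: "ev3 (tensor21 e c) x y z = ev2 e x y * poly c z"
  by (simp add: ev3_def tensor21_def poly_map_const3)
lemma ev3_tensor3[simp]: "ev3 (tensor3 a b c) x y z = poly a x * poly b y * poly c z"
  by (simp add: ev3_def tensor3_def poly_map_const3)

lemma ev3_expand: "ev3 e x y z = (\<Sum>k\<le>degree e. ev2 (coeff e k) x y * z ^ k)"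
  unfolding ev3_def by (subst poly_altdef) (simp add: poly_sum)

lemma ev3_tau3[simp]: "ev3 (tau3 e) x y z = ev3 e y z x"
  by (simp add: tau3_def ev3_expand[of e y z x] ev2_expand poly_monom sum_distrib_right sum_distrib_left mult_ac)

lemma ev3_ext_left: "ev3 (ext_left F d) x y z =
   (\<Sum>j\<le>degree d. \<Sum>i\<le>degree (coeff d j). ev2 (F (monom 1 i)) x y * (coeff (coeff d j) i * z ^ j))"
  by (simp add: ext_left_def poly_monom)


lemma inf_roots_zero:
  fixes p :: "'b::idom poly"
  assumes "infinite S" "\<And>x. x \<in> S \<Longrightarrow> poly p x = 0"
  shows "p = 0"
proof (rule ccontr)
  assume "p \<noteq> 0"
  then have "finite {x. poly p x = 0}" by (rule poly_roots_finite)
  moreover have "S \<subseteq> {x. poly p x = 0}" using assms(2) by auto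
  ultimately show False using assms(1) finite_subset by blast
qed

lemma inf_const: "infinite (range (\<lambda>v::'a::{semiring_char_0,comm_ring_1}. [:v:]))"
proof
  assume "finite (range (\<lambda>v::'a. [:v:]))"
  moreover have "inj (\<lambda>v::'a. [:v:])" by (auto simp: inj_def)
  ultimately have "finite (UNIV::'a set)" using finite_imageD by blast
  then show False using infinite_UNIV_char_0 by blast
qed

lemma ev2_zero_imp:
  fixes d :: "'a::{field_char_0} tens2"
  assumes "\<And>u v. ev2 d u v = 0"
  shows "d = 0"
proof -
  have "poly d [:v:] = 0" for v
  proof -
    have "poly (poly d [:v:]) = poly 0" using assms by (auto simp: ev2_def fun_eq_iff)
    then show ?thesis using poly_eq_poly_eq_iff by blast
  qed
  then show ?thesis using inf_const by (intro inf_roots_zero[of "range (\<lambda>v::'a. [:v:])"]) auto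
qed

lemma ev2_inj:
  fixes d :: "'a::{field_char_0} tens2"
  assumes "\<And>u v. ev2 d u v = ev2 e u v"
  shows "d = e"
  using ev2_zero_imp[of "d - e"] assms by simp

lemma ev3_zero_imp:
  fixes e :: "'a::{field_char_0} tens3"
  assumes "\<And>x y z. ev3 e x y z = 0"
  shows "e = 0"
proof -
  have "poly e [:[:z:]:] = 0" for z
    using assms by (intro ev2_zero_imp) (simp add: ev3_def)
  moreover have "infinite (range (\<lambda>v::'a. [:[:v:]:]))"
  proof
    assume "finite (range (\<lambda>v::'a. [:[:v:]:]))"
    moreover have "inj (\<lambda>v::'a. [:[:v:]:])" by (auto simp: inj_def)
    ultimately have "finite (UNIV::'a set)" using finite_imageD by blast
    then show False using infinite_UNIV_char_0 by blast
  qed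
  ultimately show ?thesis by (intro inf_roots_zero[of "range (\<lambda>v::'a. [:[:v:]:])"]) auto
qed

definition vd3 :: "'a::comm_ring_1 tens3" where
  "vd3 = (tensor3 [:0,1:] 1 1 - tensor3 1 [:0,1:] 1) * (tensor3 1 [:0,1:] 1 - tensor3 1 1 [:0,1:])
         * (tensor3 [:0,1:] 1 1 - tensor3 1 1 [:0,1:])"

lemma ev3_zero[simp]: "ev3 0 x y z = 0" by (simp add: ev3_def)
lemma ev3_mult[simp]: "ev3 (d * e) x y z = ev3 d x y z * ev3 e x y z" by (simp add: ev3_def)

lemma ev3_vd3: "ev3 vd3 x y z = (x - y) * (y - z) * (x - z)"
  by (simp add: vd3_def)

lemma ev3_zero_distinct:
  fixes e :: "'a::{field_char_0} tens3"
  assumes "\<And>x y z. x \<noteq> y \<Longrightarrow> y \<noteq> z \<Longrightarrow> x \<noteq> z \<Longrightarrow> ev3 e x y z = 0"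
  shows "e = 0"
proof -
  have "vd3 * e = 0"
    by (rule ev3_zero_imp) (metis ev3_mult ev3_vd3 assms mult_eq_0_iff eq_iff_diff_eq_0)
  moreover have "vd3 \<noteq> (0::'a tens3)"
  proof
    assume "vd3 = (0::'a tens3)"
    then have "ev3 (vd3::'a tens3) 0 1 2 = 0" by simp
    then show False by (simp add: ev3_vd3)
  qed
  ultimately show ?thesis by simp
qed


lemma pCons_split: "pCons c b = [:c:] + [:0,1:] * (b::'a::comm_ring_1 poly)"
  by simp

lemma dbl: "(x::'b::ab_group_add) = x + x \<Longrightarrow> x = 0"
  by (metis add_cancel_right_right)

context
  fixes B :: "'a::field_char_0 poly \<Rightarrow> 'a poly \<Rightarrow> 'a tens2"
  assumes db: "double_bracket B"
begin

lemma B_add2: "B a (b1 + b2) = B a b1 + B a b2" using db unfolding double_bracket_def by blast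
lemma B_smult2: "B a (smult r b) = sc2 r (B a b)" using db unfolding double_bracket_def by blast
lemma B_anti: "B a b = - flip2 (B b a)" using db unfolding double_bracket_def by blast
lemma B_leib: "B a (b * c) = bimod 1 (B a b) c + bimod b (B a c) 1" using db unfolding double_bracket_def by blast

lemma B_one: "ev2 (B a 1) u v = 0"
proof -
  have "B a 1 = bimod 1 (B a 1) 1 + bimod 1 (B a 1) 1" using B_leib[of a 1 1] by simp
  then have "ev2 (B a 1) u v = ev2 (bimod 1 (B a 1) 1 + bimod 1 (B a 1) 1) u v" by metis
  also have "\<dots> = ev2 (B a 1) u v + ev2 (B a 1) u v" by (simp only: ev2_add ev2_bimod poly_1 mult_1_left mult_1_right)
  finally have "ev2 (B a 1) u v = ev2 (B a 1) u v + ev2 (B a 1) u v" .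
  then show ?thesis using dbl by blast
qed

lemma B_const: "ev2 (B a [:c:]) u v = 0"
proof -
  have "B a [:c:] = sc2 c (B a 1)" using B_smult2[of a c 1] by simp
  then show ?thesis by (simp add: B_one)
qed

lemma step1: "(u - v) * ev2 (B a b) u v = ev2 (B a [:0,1:]) u v * (poly b u - poly b v)"
proof (induct b)
  case 0
  then show ?case using B_const[of a 0] by simp
next
  case (pCons c b)
  have "B a (pCons c b) = B a [:c:] + (bimod 1 (B a [:0,1:]) b + bimod [:0,1:] (B a b) 1)"
    by (subst pCons_split) (simp only: B_add2 B_leib)
  then have "ev2 (B a (pCons c b)) u v = ev2 (B a [:0,1:]) u v * poly b v + u * ev2 (B a b) u v"
    by (simp add: B_const)
  then have "(u - v) * ev2 (B a (pCons c b)) u v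
     = (u - v) * ev2 (B a [:0,1:]) u v * poly b v + u * ((u - v) * ev2 (B a b) u v)"
    by (simp add: algebra_simps)
  also have "\<dots> = (u - v) * ev2 (B a [:0,1:]) u v * poly b v + u * (ev2 (B a [:0,1:]) u v * (poly b u - poly b v))"
    by (simp only: pCons)
  also have "\<dots> = ev2 (B a [:0,1:]) u v * (poly (pCons c b) u - poly (pCons c b) v)"
    by (simp add: algebra_simps)
  finally show ?case .
qed

definition "pp u v = ev2 (B [:0,1:] [:0,1:]) u v"

lemma pp_anti: "pp v u = - pp u v"
  unfolding pp_def by (subst B_anti) simp

lemma step2: "(u - v) * ev2 (B a [:0,1:]) u v = pp u v * (poly a u - poly a v)"
proof -
  have "ev2 (B a [:0,1:]) u v = - ev2 (B [:0,1:] a) v u" by (subst B_anti) simp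
  then have "(u - v) * ev2 (B a [:0,1:]) u v = (v - u) * ev2 (B [:0,1:] a) v u"
    by (simp add: algebra_simps)
  also have "\<dots> = pp v u * (poly a v - poly a u)" by (simp add: step1 pp_def)
  also have "\<dots> = pp u v * (poly a u - poly a v)" by (subst pp_anti) (simp add: algebra_simps)
  finally show ?thesis .
qed

lemma Bstruct: "(u - v)^2 * ev2 (B a b) u v = pp u v * (poly a u - poly a v) * (poly b u - poly b v)"
proof -
  have "(u - v)^2 * ev2 (B a b) u v = (u - v) * ((u - v) * ev2 (B a b) u v)"
    by (simp add: power2_eq_square)
  also have "\<dots> = ((u - v) * ev2 (B a [:0,1:]) u v) * (poly b u - poly b v)"
    by (simp add: step1)
  finally show ?thesis by (simp add: step2)
qed

lemma Bval: "u \<noteq> v \<Longrightarrow> ev2 (B a b) u v = pp u v * (poly a u - poly a v) * (poly b u - poly b v) / (u - v)^2"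
  using Bstruct[of u v a b] by (simp add: field_simps)

lemma ext_eval:
  assumes "x \<noteq> y"
  shows "ev3 (ext_left (B a) d) x y z = pp x y * (poly a x - poly a y) / (x - y)^2 * (ev2 d x z - ev2 d y z)"
proof -
  define K where "K = pp x y * (poly a x - poly a y) / (x - y)^2"
  have *: "ev2 (B a (monom 1 i)) x y = K * (x ^ i - y ^ i)" for i
    using assms by (simp add: Bval poly_monom K_def)
  have "ev3 (ext_left (B a) d) x y z = (\<Sum>j\<le>degree d. \<Sum>i\<le>degree (coeff d j).
        K * (coeff (coeff d j) i * x ^ i * z ^ j) - K * (coeff (coeff d j) i * y ^ i * z ^ j))"
  proof -
    have e: "K * (x^i - y^i) * (c * z^j) = K*(c*x^i*z^j) - K*(c*y^i*z^j)" for c i j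
      by (simp only: right_diff_distrib left_diff_distrib mult_ac)
    show ?thesis by (simp only: ev3_ext_left * e)
  qed
  also have "\<dots> = K * (ev2 d x z - ev2 d y z)"
    by (simp add: ev2_expand[of d x z] ev2_expand[of d y z] sum_subtractf sum_distrib_left right_diff_distrib)
  finally show ?thesis by (simp add: K_def)
qed

end


definition Gf :: "('a::field \<Rightarrow> 'a \<Rightarrow> 'a) \<Rightarrow> ('a \<Rightarrow> 'a) \<Rightarrow> ('a \<Rightarrow> 'a) \<Rightarrow> 'a \<Rightarrow> 'a \<Rightarrow> 'a" where
  "Gf p b c u v = p u v * (b u - b v) * (c u - c v) / (u - v)^2"
definition Ef :: "('a::field \<Rightarrow> 'a \<Rightarrow> 'a) \<Rightarrow> ('a \<Rightarrow> 'a) \<Rightarrow> ('a \<Rightarrow> 'a) \<Rightarrow> ('a \<Rightarrow> 'a) \<Rightarrow> 'a \<Rightarrow> 'a \<Rightarrow> 'a \<Rightarrow> 'a" where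
  "Ef p a b c x y z = p x y * (a x - a y) / (x - y)^2 * (Gf p b c x z - Gf p b c y z)"
definition Rf :: "('a::field \<Rightarrow> 'a \<Rightarrow> 'a) \<Rightarrow> ('a \<Rightarrow> 'a) \<Rightarrow> ('a \<Rightarrow> 'a) \<Rightarrow> ('a \<Rightarrow> 'a) \<Rightarrow> 'a \<Rightarrow> 'a \<Rightarrow> 'a \<Rightarrow> 'a" where
  "Rf p a b c x y z = Ef p a b c x y z + Ef p b c a y z x + Ef p c a b z x y"
definition Kf :: "('a::field \<Rightarrow> 'a \<Rightarrow> 'a) \<Rightarrow> 'a \<Rightarrow> 'a \<Rightarrow> 'a \<Rightarrow> 'a" where
  "Kf p x y z = p x y * p x z * (y-z)^2 - p x y * p y z * (x-z)^2 + p x z * p y z * (x-y)^2"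

lemma poly_id:
  fixes x y z pxy pxz pyz A1 A2 A3 B1 B2 B3 C1 C2 C3 :: "'a::comm_ring_1"
  assumes hA: "A2*(x-z) = A1*(x-y) + A3*(y-z)"
      and hB: "B2*(x-z) = B1*(x-y) + B3*(y-z)"
      and hC: "C2*(x-z) = C1*(x-y) + C3*(y-z)"
  shows "pxy*A1*(pxz*B2*C2 - pyz*B3*C3)*(y-z)*(z-x) + pyz*B3*(-pxy*C1*A1 + pxz*C2*A2)*(x-y)*(z-x)
          - pxz*C2*(-pyz*A3*B3 - pxy*A1*B1)*(x-y)*(y-z)
       = - (A1*B3*C2) * (pxy*pxz*(y-z)^2 - pxy*pyz*(x-z)^2 + pxz*pyz*(x-y)^2)"
proof -
  have k1: "B2*(z-x) + B1*(x-y) = -B3*(y-z)" using hB by (simp add: algebra_simps)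
  have k2: "C3*(y-z) + C1*(x-y) = C2*(x-z)" using hC by (simp add: algebra_simps)
  have k3: "A2*(z-x) + A3*(y-z) = -A1*(x-y)" using hA by (simp add: algebra_simps)
  have "pxy*A1*(pxz*B2*C2 - pyz*B3*C3)*(y-z)*(z-x) + pyz*B3*(-pxy*C1*A1 + pxz*C2*A2)*(x-y)*(z-x)
          - pxz*C2*(-pyz*A3*B3 - pxy*A1*B1)*(x-y)*(y-z)
     = pxy*pxz*A1*C2*(y-z)*(B2*(z-x) + B1*(x-y)) - pxy*pyz*A1*B3*(z-x)*(C3*(y-z) + C1*(x-y))
       + pxz*pyz*B3*C2*(x-y)*(A2*(z-x) + A3*(y-z))"
    by (simp add: algebra_simps)
  also have "\<dots> = pxy*pxz*A1*C2*(y-z)*(-B3*(y-z)) - pxy*pyz*A1*B3*(z-x)*(C2*(x-z))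
       + pxz*pyz*B3*C2*(x-y)*(-A1*(x-y))"
    by (simp only: k1 k2 k3)
  also have "\<dots> = - (A1*B3*C2) * (pxy*pxz*(y-z)^2 - pxy*pyz*(x-z)^2 + pxz*pyz*(x-y)^2)"
    by (simp add: algebra_simps power2_eq_square)
  finally show ?thesis .
qed

lemma three_frac:
  fixes d1 d2 d3 :: "'a::field"
  assumes "d1 \<noteq> 0" "d2 \<noteq> 0" "d3 \<noteq> 0"
  shows "X/d1 + Y/d2 + Z/d3 = (X*(d2*d3) + Y*(d1*d3) + Z*(d1*d2))/(d1*(d2*d3))"
  using assms by (simp add: field_simps)

lemma Rf_closed:
  fixes p :: "'a::field \<Rightarrow> 'a \<Rightarrow> 'a"
  assumes anti: "\<And>u v. p v u = - p u v"
    and d: "x \<noteq> y" "y \<noteq> z" "x \<noteq> z"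
  shows "Rf p a b c x y z = - ((a x - a y)/(x-y)) * ((b y - b z)/(y-z)) * ((c x - c z)/(x-z))
           * Kf p x y z / ((x-y)*(y-z)*(z-x))"
proof -
  have n: "x - y \<noteq> 0" "y - z \<noteq> 0" "x - z \<noteq> 0" "z - x \<noteq> 0" "y - x \<noteq> 0" "z - y \<noteq> 0" using d by auto
  define A1 where "A1 = (a x - a y)/(x-y)"
  define A2 where "A2 = (a x - a z)/(x-z)"
  define A3 where "A3 = (a y - a z)/(y-z)"
  define B1 where "B1 = (b x - b y)/(x-y)"
  define B2 where "B2 = (b x - b z)/(x-z)"
  define B3 where "B3 = (b y - b z)/(y-z)"
  define C1 where "C1 = (c x - c y)/(x-y)"
  define C2 where "C2 = (c x - c z)/(x-z)"
  define C3 where "C3 = (c y - c z)/(y-z)"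
  have hA: "A2*(x-z) = A1*(x-y) + A3*(y-z)" using n by (simp add: A1_def A2_def A3_def)
  have hB: "B2*(x-z) = B1*(x-y) + B3*(y-z)" using n by (simp add: B1_def B2_def B3_def)
  have hC: "C2*(x-z) = C1*(x-y) + C3*(y-z)" using n by (simp add: C1_def C2_def C3_def)
  have g1: "Gf p b c x z = p x z * B2 * C2" using n by (simp add: Gf_def B2_def C2_def power2_eq_square)
  have g2: "Gf p b c y z = p y z * B3 * C3" using n by (simp add: Gf_def B3_def C3_def power2_eq_square)
  have g3: "Gf p c a y x = - p x y * C1 * A1" using n
    by (simp add: Gf_def C1_def A1_def power2_eq_square anti[of x y] field_simps)
  have g4: "Gf p c a z x = - p x z * C2 * A2" using n
    by (simp add: Gf_def C2_def A2_def power2_eq_square anti[of x z] field_simps)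
  have g5: "Gf p a b z y = - p y z * A3 * B3" using n
    by (simp add: Gf_def A3_def B3_def power2_eq_square anti[of y z] field_simps)
  have g6: "Gf p a b x y = p x y * A1 * B1" using n by (simp add: Gf_def A1_def B1_def power2_eq_square)
  have e1: "Ef p a b c x y z = p x y * A1 * (p x z * B2 * C2 - p y z * B3 * C3) / (x - y)"
    using n unfolding Ef_def g1 g2 by (simp add: A1_def power2_eq_square)
  have e2: "Ef p b c a y z x = p y z * B3 * (- p x y * C1 * A1 + p x z * C2 * A2) / (y - z)"
    using n unfolding Ef_def g3 g4 by (simp add: B3_def power2_eq_square)
  have e3: "Ef p c a b z x y = - p x z * C2 * (- p y z * A3 * B3 - p x y * A1 * B1) / (z - x)"
  proof -
    have h: "p z x * (c z - c x) / (z - x)^2 = - p x z * C2 / (z - x)"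
    proof -
      have hc: "c z - c x = C2 * (z - x)" using n by (simp add: C2_def field_simps)
      show ?thesis unfolding hc anti[of x z] using n by (simp add: power2_eq_square)
    qed
    show ?thesis unfolding Ef_def g5 g6 h by simp
  qed
  have "Rf p a b c x y z = (p x y * A1 * (p x z * B2 * C2 - p y z * B3 * C3) * (y-z)*(z-x)
     + p y z * B3 * (- p x y * C1 * A1 + p x z * C2 * A2) * (x-y)*(z-x)
     - p x z * C2 * (- p y z * A3 * B3 - p x y * A1 * B1) * (x-y)*(y-z)) / ((x-y)*(y-z)*(z-x))"
    unfolding Rf_def e1 e2 e3 three_frac[OF n(1,2,4)] by (simp add: algebra_simps)
  also have "\<dots> = - (A1*B3*C2) * Kf p x y z / ((x-y)*(y-z)*(z-x))"
    by (subst poly_id[OF hA hB hC]) (simp add: Kf_def)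
  finally show ?thesis by (simp add: A1_def B3_def C2_def)
qed


lemma coeff_poly_const: "coeff (poly S [:v:]) i = poly (map_poly (\<lambda>c. coeff c i) S) v"
  by (induct S) (auto simp: map_poly_pCons)

lemma poly_deg1: "degree (p::'a::comm_ring_1 poly) \<le> 1 \<Longrightarrow> poly p u = coeff p 0 + u * coeff p 1"
proof -
  assume d: "degree p \<le> 1"
  have "p = [:coeff p 0, coeff p 1:]"
  proof (rule poly_eqI)
    fix n show "coeff p n = coeff [:coeff p 0, coeff p 1:] n"
      using d by (cases n) (auto simp: coeff_pCons coeff_eq_0 split: nat.split)
  qed
  then have "poly p u = poly [:coeff p 0, coeff p 1:] u" by simp
  then show ?thesis by (simp add: mult.commute)
qed

lemma cofinite_infinite:
  assumes "finite T" shows "infinite (UNIV - T :: 'a::field_char_0 set)"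
  by (rule Diff_infinite_finite[OF assms infinite_UNIV_char_0])

lemma deg_bound:
  fixes S :: "'a::field_char_0 poly poly" and c0 :: 'a
  assumes ident: "\<And>x y z. x \<noteq> y \<Longrightarrow> y \<noteq> z \<Longrightarrow> x \<noteq> z \<Longrightarrow>
      (y-z) * ev2 S x y * ev2 S x z + (z-x) * ev2 S x y * ev2 S y z + (x-y) * ev2 S x z * ev2 S y z
      = c0 * ((x-y)*(y-z)*(x-z))"
  shows "degree (poly S [:v:]) \<le> 1"
proof (rule ccontr)
  assume "\<not> degree (poly S [:v:]) \<le> 1"
  define d where "d = degree (poly S [:v:])"
  have d2: "d \<ge> 2" using \<open>\<not> _\<close> by (simp add: d_def)
  define h where "h = map_poly (\<lambda>c. coeff c d) S"
  have hv: "poly h w = coeff (poly S [:w:]) d" for w by (simp add: h_def coeff_poly_const)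
  have "poly h v \<noteq> 0" using d2 by (auto simp: hv d_def)
  then have "h \<noteq> 0" by auto
  then have fin: "finite {w. poly h w = 0}" by (rule poly_roots_finite)
  have "infinite (UNIV - {w. poly h w = 0})" by (rule cofinite_infinite[OF fin])
  then obtain y where y: "y \<in> UNIV - {w. poly h w = 0}"
    using infinite_imp_nonempty by blast
  have "infinite (UNIV - {w. poly h w = 0} - {y})" using \<open>infinite (UNIV - _)\<close> by simp
  then obtain z where z: "z \<in> UNIV - {w. poly h w = 0} - {y}"
    using infinite_imp_nonempty by blast
  define Sy where "Sy = poly S [:y:]"
  define Sz where "Sz = poly S [:z:]"
  have yz: "y \<noteq> z" using z by auto
  have dy: "degree Sy \<ge> 2" using y d2 le_degree[of Sy d] by (simp add: Sy_def hv[symmetric])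
  have dz: "degree Sz \<ge> 2" using z d2 le_degree[of Sz d] by (simp add: Sz_def hv[symmetric])
  have Sy0: "Sy \<noteq> 0" using dy by auto
  have Sz0: "Sz \<noteq> 0" using dz by auto
  define c where "c = ev2 S y z"
  define Q where "Q = smult (y - z) (Sy * Sz)"
  define R where "R = smult c ([:z, -1:] * Sy + [:-y, 1:] * Sz) - smult (c0 * (y - z)) ([:-y, 1:] * [:-z, 1:])"
  have evS: "ev2 S X w = poly (poly S [:w:]) X" for X w by (simp add: ev2_def)
  have "Q + R = 0"
  proof (rule inf_roots_zero[of "UNIV - {y, z}"])
    show "infinite (UNIV - {y, z} :: 'a set)" by (rule cofinite_infinite) simp
  next
    fix X assume "X \<in> UNIV - {y, z}"
    then have X: "X \<noteq> y" "X \<noteq> z" by auto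
    have e1: "ev2 S X y = poly Sy X" "ev2 S X z = poly Sz X" "ev2 S y z = c"
      by (simp_all add: Sy_def Sz_def c_def ev2_def)
    have "poly (Q + R) X = (y-z) * (poly Sy X * poly Sz X) + c * ((z - X) * poly Sy X + (X - y) * poly Sz X)
       - (c0 * (y - z)) * ((X - y) * (X - z))"
      by (simp add: Q_def R_def algebra_simps)
    also have "\<dots> = (y-z) * ev2 S X y * ev2 S X z + (z-X) * ev2 S X y * ev2 S y z + (X-y) * ev2 S X z * ev2 S y z
      - c0 * ((X-y)*(y-z)*(X-z))"
      unfolding e1 by (simp add: algebra_simps)
    also have "\<dots> = 0" using ident[of X y z] X yz by simp
    finally show "poly (Q + R) X = 0" .
  qed
  have dQ: "degree Q = degree Sy + degree Sz" using yz Sy0 Sz0 by (simp add: Q_def degree_mult_eq)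
  have "degree R \<le> max (degree Sy) (degree Sz) + 1"
  proof -
    have "degree ([:z, -1:] * Sy) \<le> degree Sy + 1"
      using degree_mult_le[of "[:z, -1:]" Sy] by simp
    moreover have "degree ([:-y, 1:] * Sz) \<le> degree Sz + 1"
      using degree_mult_le[of "[:-y, 1:]" Sz] by simp
    moreover have "degree ([:-y, 1:] * [:-z, 1::'a:]) \<le> 2"
      using degree_mult_le[of "[:-y, 1:]" "[:-z, 1::'a:]"] by simp
    ultimately have a: "degree ([:z, -1:] * Sy) \<le> max (degree Sy) (degree Sz) + 1"
        "degree ([:-y, 1:] * Sz) \<le> max (degree Sy) (degree Sz) + 1"
        "degree ([:-y, 1:] * [:-z, 1::'a:]) \<le> max (degree Sy) (degree Sz) + 1"
      using dy by auto
    have b: "degree (smult c ([:z, -1:] * Sy + [:-y, 1:] * Sz)) \<le> max (degree Sy) (degree Sz) + 1"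
      by (rule le_trans[OF degree_smult_le degree_add_le[OF a(1,2)]])
    have c: "degree (smult (c0 * (y - z)) ([:-y, 1:] * [:-z, 1::'a:])) \<le> max (degree Sy) (degree Sz) + 1"
      by (rule le_trans[OF degree_smult_le a(3)])
    show ?thesis unfolding R_def by (rule degree_diff_le[OF b c])
  qed
  then have "degree R < degree Q" using dQ dy dz by auto
  then have "degree (Q + R) = degree Q" by (rule degree_add_eq_left[of R Q])
  then show False using \<open>Q + R = 0\<close> dQ dy by simp
qed


lemma K_s:
  fixes x y z sxy sxz syz :: "'a::comm_ring_1"
  shows "((y-x)*sxy)*((z-x)*sxz)*(y-z)^2 - ((y-x)*sxy)*((z-y)*syz)*(x-z)^2 + ((z-x)*sxz)*((z-y)*syz)*(x-y)^2
     = ((x-y)*(y-z)*(x-z)) * ((y-z)*sxy*sxz + (z-x)*sxy*syz + (x-y)*sxz*syz)"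
  by (simp add: algebra_simps power2_eq_square)

lemma bil:
  fixes x y z a0 b0 b1 :: "'a::comm_ring_1" and s :: "'a \<Rightarrow> 'a \<Rightarrow> 'a"
  assumes "\<And>u v. s u v = a0 + b0*(u+v) + b1*(u*v)"
  shows "(y-z)*s x y*s x z + (z-x)*s x y*s y z + (x-y)*s x z*s y z = (b0^2 - a0*b1) * ((x-y)*(y-z)*(x-z))"
  unfolding assms by (simp add: algebra_simps power2_eq_square)

lemma poly_poly_eval: "poly (poly d q) u = poly (poly d [:poly q u:]) u"
  by (induct d) auto

lemma S_bilinear:
  fixes S :: "'a::field_char_0 poly poly" and c0 :: 'a
  assumes sym: "\<And>u v. ev2 S u v = ev2 S v u"
  assumes ident: "\<And>x y z. x \<noteq> y \<Longrightarrow> y \<noteq> z \<Longrightarrow> x \<noteq> z \<Longrightarrow>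
      (y-z) * ev2 S x y * ev2 S x z + (z-x) * ev2 S x y * ev2 S y z + (x-y) * ev2 S x z * ev2 S y z
      = c0 * ((x-y)*(y-z)*(x-z))"
  shows "\<exists>a0 b0 b1. \<forall>u v. ev2 S u v = a0 + b0*(u+v) + b1*(u*v)"
proof -
  define A where "A v = coeff (poly S [:v:]) 0" for v
  define Bf where "Bf v = coeff (poly S [:v:]) 1" for v
  have lin: "ev2 S u v = A v + u * Bf v" for u v
    unfolding ev2_def A_def Bf_def by (rule poly_deg1[OF deg_bound[OF ident]])
  have h1: "A v = A 0 + v * Bf 0" for v using sym[of 0 v] lin[of 0 v] lin[of v 0] by simp
  have h2: "Bf v = Bf 0 + v * (Bf 1 - Bf 0)" for v
  proof -
    have "A v + Bf v = A 1 + v * Bf 1" using sym[of 1 v] lin[of 1 v] lin[of v 1] by simp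
    then show ?thesis using h1[of v] h1[of 1] by (simp add: algebra_simps)
  qed
  show ?thesis
  proof (intro exI allI)
    fix u v
    show "ev2 S u v = A 0 + Bf 0 * (u + v) + (Bf 1 - Bf 0) * (u * v)"
      unfolding lin h1[of v] h2[of v] by (simp add: algebra_simps)
  qed
qed


lemma neg_self_zero: "(a::'a::field_char_0) = - a \<Longrightarrow> a = 0"
proof -
  assume "a = - a"
  then have "a + a = 0" using eq_neg_iff_add_eq_0 by blast
  then have "2 * a = 0" by (simp only: mult_2)
  then show "a = 0" by simp
qed

lemma solve1:
  fixes K V c :: "'a::field"
  assumes "V \<noteq> 0" "- K / (- V) = c * V" shows "K = c * V^2"
  using assms by (simp add: field_simps power2_eq_square)

lemma solve2:
  fixes p q r A B C :: "'a::field"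
  assumes "p \<noteq> 0" "q \<noteq> 0" "r \<noteq> 0"
  shows "- (A/p) * (B/q) * (C/r) * (1/4 * (p*q*r)^2) / (p*q*(-r)) = 1/4*(A*B*C)"
  using assms by (simp add: field_simps power2_eq_square)

context
  fixes B :: "'a::field_char_0 poly \<Rightarrow> 'a poly \<Rightarrow> 'a tens2"
  assumes db: "double_bracket B"
begin

lemma triple_eval:
  assumes "x \<noteq> y" "y \<noteq> z" "x \<noteq> z"
  shows "ev3 (triple_bracket B a b c) x y z = Rf (pp B) (poly a) (poly b) (poly c) x y z"
  using assms
  by (simp add: triple_bracket_def ext_eval[OF db] Bval[OF db] Rf_def Ef_def Gf_def)

lemma rhs_eval:
  "ev3 (sc3 (1/4) (tensor3 (c * a) b 1 - tensor3 (c * a) 1 b - tensor3 c (a * b) 1 + tensor3 c a b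
       - tensor3 a b c + tensor3 a 1 (b * c) + tensor3 1 (a * b) c - tensor3 1 a (b * c))) x y z
   = 1/4 * ((poly a x - poly a y) * (poly b y - poly b z) * (poly c x - poly c z))"
  apply simp
  apply (rule arg_cong[where f="\<lambda>t. 1/4 * t"])
  apply (simp add: algebra_simps)
  done

lemma closed:
  assumes "x \<noteq> y" "y \<noteq> z" "x \<noteq> z"
  shows "Rf (pp B) a b c x y z = - ((a x - a y)/(x-y)) * ((b y - b z)/(y-z)) * ((c x - c z)/(x-z))
           * Kf (pp B) x y z / ((x-y)*(y-z)*(z-x))"
  by (rule Rf_closed[OF pp_anti[OF db] assms])

lemma qp_iff_K:
  "quasi_poisson B \<longleftrightarrow> (\<forall>x y z. x \<noteq> y \<longrightarrow> y \<noteq> z \<longrightarrow> x \<noteq> z \<longrightarrow>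
      Kf (pp B) x y z = 1/4 * ((x-y)*(y-z)*(x-z))^2)"
proof
  assume qp: "quasi_poisson B"
  show "\<forall>x y z. x \<noteq> y \<longrightarrow> y \<noteq> z \<longrightarrow> x \<noteq> z \<longrightarrow> Kf (pp B) x y z = 1/4 * ((x-y)*(y-z)*(x-z))^2"
  proof (intro allI impI)
    fix x y z :: 'a assume d: "x \<noteq> y" "y \<noteq> z" "x \<noteq> z"
    let ?t = "[:0,1::'a:]"
    have "ev3 (triple_bracket B ?t ?t ?t) x y z = 1/4 * ((poly ?t x - poly ?t y) * (poly ?t y - poly ?t z) * (poly ?t x - poly ?t z))"
      using qp[unfolded quasi_poisson_def, rule_format, of ?t ?t ?t] by (simp only: rhs_eval)
    then have "ev3 (triple_bracket B ?t ?t ?t) x y z = 1/4 * ((x - y) * (y - z) * (x - z))"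
      by simp
    then have "Rf (pp B) (poly ?t) (poly ?t) (poly ?t) x y z = 1/4 * ((x - y) * (y - z) * (x - z))"
      using triple_eval[OF d] by simp
    then have "- Kf (pp B) x y z / ((x-y)*(y-z)*(z-x)) = 1/4 * ((x - y) * (y - z) * (x - z))"
      using closed[OF d] d by simp
    moreover have "(x-y)*(y-z)*(z-x) = - ((x-y)*(y-z)*(x-z))" by (simp add: algebra_simps)
    ultimately have "- Kf (pp B) x y z / (- ((x-y)*(y-z)*(x-z))) = 1/4 * ((x - y) * (y - z) * (x - z))"
      by simp
    moreover have "(x-y)*(y-z)*(x-z) \<noteq> 0" using d by simp
    ultimately show "Kf (pp B) x y z = 1/4 * ((x-y)*(y-z)*(x-z))^2"
      using solve1 by blast
  qed
next
  assume K: "\<forall>x y z. x \<noteq> y \<longrightarrow> y \<noteq> z \<longrightarrow> x \<noteq> z \<longrightarrow> Kf (pp B) x y z = 1/4 * ((x-y)*(y-z)*(x-z))^2"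
  show "quasi_poisson B"
    unfolding quasi_poisson_def
  proof (intro allI)
    fix a b c :: "'a poly"
    let ?R = "sc3 (1/4) (tensor3 (c * a) b 1 - tensor3 (c * a) 1 b - tensor3 c (a * b) 1 + tensor3 c a b
       - tensor3 a b c + tensor3 a 1 (b * c) + tensor3 1 (a * b) c - tensor3 1 a (b * c))"
    have "triple_bracket B a b c - ?R = 0"
    proof (rule ev3_zero_distinct)
      fix x y z :: 'a assume d: "x \<noteq> y" "y \<noteq> z" "x \<noteq> z"
      have n: "x - y \<noteq> 0" "y - z \<noteq> 0" "x - z \<noteq> 0" "z - x \<noteq> 0" using d by auto
      have "ev3 (triple_bracket B a b c) x y z = - ((poly a x - poly a y)/(x-y)) * ((poly b y - poly b z)/(y-z))
          * ((poly c x - poly c z)/(x-z)) * (1/4 * ((x-y)*(y-z)*(x-z))^2) / ((x-y)*(y-z)*(z-x))"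
        using triple_eval[OF d] closed[OF d] K d by simp
      also have "\<dots> = 1/4 * ((poly a x - poly a y) * (poly b y - poly b z) * (poly c x - poly c z))"
      proof -
        have "z - x = - (x - z)" by simp
        then show ?thesis using solve2[OF n(1,2,3)] by simp
      qed
      finally show "ev3 (triple_bracket B a b c - ?R) x y z = 0"
        by (simp only: ev3_diff rhs_eval) simp
    qed
    then show "triple_bracket B a b c = ?R" by simp
  qed
qed

end


theorem proposition4p1:
  fixes B :: "'a::field_char_0 poly \<Rightarrow> 'a poly \<Rightarrow> 'a poly poly"
  assumes "double_bracket B"
  shows "quasi_poisson B \<longleftrightarrow>
    (\<exists>l m n :: 'a.
       B [:0, 1:] [:0, 1:] =
         sc2 l (tensor2 [:0, 1:] 1 - tensor2 1 [:0, 1:])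
       + sc2 m (tensor2 ([:0, 1:]^2) 1 - tensor2 1 ([:0, 1:]^2))
       + sc2 n (tensor2 ([:0, 1:]^2) [:0, 1:] - tensor2 [:0, 1:] ([:0, 1:]^2))
     \<and> 4 * (m^2 - l * n) = 1)"
proof -
  note db = assms
  let ?t = "[:0, 1::'a:]"
  define P where "P = B ?t ?t"
  have ppP: "pp B u v = ev2 P u v" for u v by (simp add: pp_def[OF db] P_def)
  have ev2form: "ev2 (sc2 l (tensor2 ?t 1 - tensor2 1 ?t) + sc2 m (tensor2 (?t^2) 1 - tensor2 1 (?t^2))
       + sc2 n (tensor2 (?t^2) ?t - tensor2 ?t (?t^2))) u v
     = (v - u) * ((-l) + (-m)*(u+v) + (-n)*(u*v))" for l m n u v
    by (simp add: algebra_simps power2_eq_square)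
  have "quasi_poisson B \<longleftrightarrow> (\<forall>x y z. x \<noteq> y \<longrightarrow> y \<noteq> z \<longrightarrow> x \<noteq> z \<longrightarrow>
      Kf (pp B) x y z = 1/4 * ((x-y)*(y-z)*(x-z))^2)" by (rule qp_iff_K[OF db])
  also have "\<dots> \<longleftrightarrow> (\<exists>l m n :: 'a.
       B ?t ?t = sc2 l (tensor2 ?t 1 - tensor2 1 ?t) + sc2 m (tensor2 (?t^2) 1 - tensor2 1 (?t^2))
       + sc2 n (tensor2 (?t^2) ?t - tensor2 ?t (?t^2)) \<and> 4 * (m^2 - l * n) = 1)"
  proof
    assume K: "\<forall>x y z. x \<noteq> y \<longrightarrow> y \<noteq> z \<longrightarrow> x \<noteq> z \<longrightarrow> Kf (pp B) x y z = 1/4 * ((x-y)*(y-z)*(x-z))^2"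
    have diag: "ev2 P u u = 0" for u
      using pp_anti[OF db, of u u] neg_self_zero by (simp add: ppP)
    have "poly (poly P ?t) = poly 0"
    proof
      fix u
      have "poly (poly P ?t) u = poly (poly P [:poly ?t u:]) u" by (rule poly_poly_eval)
      also have "\<dots> = ev2 P u u" by (simp add: ev2_def)
      finally show "poly (poly P ?t) u = poly 0 u" using diag by simp
    qed
    then have "poly P ?t = 0" unfolding poly_eq_poly_eq_iff .
    then have "poly P (- (- ?t)) = 0" by simp
    then have "[:- ?t, 1:] dvd P" by (simp only: dvd_iff_poly_eq_0)
    then obtain S where PS: "P = [:- ?t, 1:] * S" by (rule dvdE)
    have ppS: "pp B u v = (v - u) * ev2 S u v" for u v
      by (simp add: ppP PS ev2_def algebra_simps)
    have sym: "ev2 S u v = ev2 S v u" for u v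
    proof (cases "u = v")
      case False
      have "(v - u) * ev2 S u v = (v - u) * ev2 S v u"
        using pp_anti[OF db, of u v] by (simp add: ppS algebra_simps)
      then show ?thesis using False by simp
    qed simp
    have ident: "(y-z) * ev2 S x y * ev2 S x z + (z-x) * ev2 S x y * ev2 S y z + (x-y) * ev2 S x z * ev2 S y z
        = 1/4 * ((x-y)*(y-z)*(x-z))" if d: "x \<noteq> y" "y \<noteq> z" "x \<noteq> z" for x y z
    proof -
      have "Kf (pp B) x y z = ((x-y)*(y-z)*(x-z)) *
          ((y-z) * ev2 S x y * ev2 S x z + (z-x) * ev2 S x y * ev2 S y z + (x-y) * ev2 S x z * ev2 S y z)"
        unfolding Kf_def ppS by (rule K_s)
      then have "((x-y)*(y-z)*(x-z)) *
          ((y-z) * ev2 S x y * ev2 S x z + (z-x) * ev2 S x y * ev2 S y z + (x-y) * ev2 S x z * ev2 S y z)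
          = ((x-y)*(y-z)*(x-z)) * (1/4 * ((x-y)*(y-z)*(x-z)))"
        using K d by (simp add: power2_eq_square)
      moreover have "(x-y)*(y-z)*(x-z) \<noteq> 0" using d by simp
      ultimately show ?thesis by simp
    qed
    obtain a0 b0 b1 where ab: "\<And>u v. ev2 S u v = a0 + b0*(u+v) + b1*(u*v)"
      using S_bilinear[OF sym ident] by blast
    have c: "b0^2 - a0*b1 = 1/4"
    proof -
      have e1: "(1-2)*ev2 S 0 1*ev2 S 0 2 + (2-0)*ev2 S 0 1*ev2 S 1 2 + (0-1)*ev2 S 0 2*ev2 S 1 2
          = 1/4 * ((0-1)*(1-2)*(0-(2::'a)))"
        by (rule ident) simp_all
      have e2: "(1-2)*ev2 S 0 1*ev2 S 0 2 + (2-0)*ev2 S 0 1*ev2 S 1 2 + (0-1)*ev2 S 0 2*ev2 S 1 2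
          = (b0^2 - a0*b1) * ((0-1)*(1-2)*(0-(2::'a)))"
        by (rule bil) (rule ab)
      have "(b0^2 - a0*b1) * ((0-1)*(1-2)*(0-(2::'a))) = 1/4 * ((0-1)*(1-2)*(0-(2::'a)))"
        using e1 e2 by simp
      moreover have V: "((0-1)*(1-2)*(0-(2::'a))) \<noteq> 0" by simp
      ultimately show ?thesis using mult_right_cancel[OF V] by blast
    qed
    show "\<exists>l m n :: 'a.
       B ?t ?t = sc2 l (tensor2 ?t 1 - tensor2 1 ?t) + sc2 m (tensor2 (?t^2) 1 - tensor2 1 (?t^2))
       + sc2 n (tensor2 (?t^2) ?t - tensor2 ?t (?t^2)) \<and> 4 * (m^2 - l * n) = 1"
    proof (intro exI conjI)
      show "B ?t ?t = sc2 (-a0) (tensor2 ?t 1 - tensor2 1 ?t) + sc2 (-b0) (tensor2 (?t^2) 1 - tensor2 1 (?t^2))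
       + sc2 (-b1) (tensor2 (?t^2) ?t - tensor2 ?t (?t^2))"
        unfolding P_def[symmetric]
      proof (rule ev2_inj)
        fix u v
        show "ev2 P u v = ev2 (sc2 (-a0) (tensor2 ?t 1 - tensor2 1 ?t) + sc2 (-b0) (tensor2 (?t^2) 1 - tensor2 1 (?t^2))
          + sc2 (-b1) (tensor2 (?t^2) ?t - tensor2 ?t (?t^2))) u v"
          unfolding ev2form using ppS[of u v] by (simp add: ppP ab)
      qed
      show "4 * ((-b0)^2 - (-a0) * (-b1)) = 1" using c by (simp add: algebra_simps)
    qed
  next
    assume "\<exists>l m n :: 'a.
       B ?t ?t = sc2 l (tensor2 ?t 1 - tensor2 1 ?t) + sc2 m (tensor2 (?t^2) 1 - tensor2 1 (?t^2))
       + sc2 n (tensor2 (?t^2) ?t - tensor2 ?t (?t^2)) \<and> 4 * (m^2 - l * n) = 1"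
    then obtain l m n where form: "B ?t ?t = sc2 l (tensor2 ?t 1 - tensor2 1 ?t) + sc2 m (tensor2 (?t^2) 1 - tensor2 1 (?t^2))
       + sc2 n (tensor2 (?t^2) ?t - tensor2 ?t (?t^2))" and c: "4 * (m^2 - l * n) = 1" by blast
    define s where "s u v = (-l) + (-m)*(u+v) + (-n)*(u*v)" for u v
    have pps: "pp B u v = (v - u) * s u v" for u v
      unfolding pp_def[OF db] form ev2form s_def ..
    show "\<forall>x y z. x \<noteq> y \<longrightarrow> y \<noteq> z \<longrightarrow> x \<noteq> z \<longrightarrow> Kf (pp B) x y z = 1/4 * ((x-y)*(y-z)*(x-z))^2"
    proof (intro allI impI)
      fix x y z :: 'a
      have "Kf (pp B) x y z = ((x-y)*(y-z)*(x-z)) *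
          ((y-z) * s x y * s x z + (z-x) * s x y * s y z + (x-y) * s x z * s y z)"
        unfolding Kf_def pps by (rule K_s)
      also have "\<dots> = ((x-y)*(y-z)*(x-z)) * (((-m)^2 - (-l)*(-n)) * ((x-y)*(y-z)*(x-z)))"
        by (rule arg_cong[where f="\<lambda>w. ((x-y)*(y-z)*(x-z)) * w"], rule bil) (simp add: s_def)
      also have "\<dots> = 1/4 * ((x-y)*(y-z)*(x-z))^2"
      proof -
        have q: "(-m)^2 - (-l)*(-n) = 1/4" using c by (simp add: field_simps)
        show ?thesis unfolding q by (simp only: power2_eq_square mult_ac)
      qed
      finally show "Kf (pp B) x y z = 1/4 * ((x-y)*(y-z)*(x-z))^2" .
    qed
  qed
  finally show ?thesis .
qed


end
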